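(* Let $x(t)\in\mathbb{R}^{n_x}$, $t\in[0,T]$, solve $dx(t)=f(t,x(t),u(t))\,dt+G(t,x(t),u(t))\,dw(t)$, and let $g_1,\dots,g_m:\mathbb{R}^{n_x}\to\mathbb{R}$ be twice continuously differentiable, with gradients $a_j$ and Hessians $H_j$. Suppose the Control-Independence Assumption and the Paired-Lipschitz Assumption hold for each $g_j$, and assume: (1) $f_t$ is pathwise bounded on $[0,T]$ almost surely and $\mathbb{E}\int_0^T\|f_t\|^2dt<\infty$; (2) $\mathbb{E}\|G_t\|^2$ is bounded over $t\in[0,T]$ and $\mathbb{E}\int_0^T\|G_t\|^2dt<\infty$. Let $y(t)\triangleq(g_1(x(t)),\dots,g_m(x(t)))$. Let $\mathcal{P}_n=\{0=t_0<t_1<\dots<t_{k_n}=T\}$ be a sequence of partitions of $[0,T]$ with mesh $\delta_n\to0$ and $k_n\delta_n\le cT$ for a fixed $c>0$, and let $\hat y^n$ be the piecewise constant-coefficient approximation of $y$ associated with $\mathcal{P}_n$. Then there exists a sequence $\epsilon_n\to0$ such that $\hat y^n$ converges $\epsilon_n$-pathwise-uniformly to $y$.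
   Context: Setting: $(\Omega,\mathcal{F},P)$ with a filtration, $w(t)$ a standard multidimensional Brownian motion, $u(t)$ a progressively measurable control process; $f_t\triangleq f(t,x(t),u(t))$, $G_t\triangleq G(t,x(t),u(t))$. Control-Independence Assumption (for $g_j$): either (a) $u(t)=\kappa(t,x(t))$ with $\kappa$ deterministic and Lipschitz, or (b) $a_j(x)^\top f(t,x,u)$ and $a_j(x)^\top G(t,x,u)$ do not depend on $u$. Paired-Lipschitz Assumption (for $g_j$ and $G$): either (i) $G$ is constant and $a_j$ is Lipschitz, or (ii) $a_j$ is constant and $G$ is Lipschitz, or (iii) both $a_j$ and $G$ are bounded and Lipschitz. Piecewise approximation: for $s\in[0,T]$ let $t=\max\{t_i\in\mathcal{P}_n: t_i\le s\}$, and set $\hat y^n(s)\triangleq y(t)+(s-t)\,h_t+\Sigma_t\,(w(s)-w(t))$, where $h_{t,j}\triangleq a_j(x(t))^\top f_t+\frac12\mathrm{tr}\big(G_t^\top H_j(x(t))G_t\big)$ and $\Sigma_t$ is the matrix whose $j$-th row is $a_j(x(t))^\top G_t$. Pathwise-uniform convergence: $z^n$ converges $\epsilon_n$-pathwise-uniformly to $z$ if there is a random variable $M_\omega$ with $0<M_\omega<\infty$ a.s. (not depending on $n$) such that $P\big(\sup_{s\in[0,T]}\|z^n(s)-z(s)\|>\epsilon_nM_\omega\big)\to0$. *)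

theory Defs
  imports "HOL-Probability.Probability"
begin

definition is_filtration :: "'a measure \<Rightarrow> (real \<Rightarrow> 'a measure) \<Rightarrow> bool" where
  "is_filtration M F \<longleftrightarrow>
     (\<forall>t. space (F t) = space M \<and> sets (F t) \<subseteq> sets M) \<and>
     (\<forall>s t. s \<le> t \<longrightarrow> sets (F s) \<subseteq> sets (F t))"

definition progressive ::
  "(real \<Rightarrow> 'a measure) \<Rightarrow> real \<Rightarrow> (real \<Rightarrow> 'a \<Rightarrow> 'b::topological_space) \<Rightarrow> bool" where
  "progressive F T X \<longleftrightarrow>
     (\<forall>t\<in>{0..T}. (\<lambda>(s, \<omega>). X s \<omega>) \<in> borel_measurable (restrict_space borel {0..t} \<Otimes>\<^sub>M F t))"

definition std_brownian_motion ::
  "'a measure \<Rightarrow> (real \<Rightarrow> 'a measure) \<Rightarrow> (real \<Rightarrow> 'a \<Rightarrow> real ^ 'd) \<Rightarrow> bool" where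
  "std_brownian_motion M F w \<longleftrightarrow>
     (\<forall>t\<ge>0. w t \<in> borel_measurable (F t)) \<and>
     (\<forall>\<omega>\<in>space M. w 0 \<omega> = 0) \<and>
     (AE \<omega> in M. continuous_on {0..} (\<lambda>t. w t \<omega>)) \<and>
     (\<forall>s t. 0 \<le> s \<longrightarrow> s < t \<longrightarrow>
        (\<forall>i. distributed M lborel (\<lambda>\<omega>. (w t \<omega> - w s \<omega>) $ i) (normal_density 0 (sqrt (t - s)))) \<and>
        prob_space.indep_vars M (\<lambda>_. borel) (\<lambda>i \<omega>. (w t \<omega> - w s \<omega>) $ i) UNIV \<and>
        (\<forall>A\<in>sets (F s). \<forall>B\<in>sets borel.
           measure M (A \<inter> {\<omega>\<in>space M. w t \<omega> - w s \<omega> \<in> B})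
             = measure M A * measure M {\<omega>\<in>space M. w t \<omega> - w s \<omega> \<in> B}))"

definition valid_simple ::
  "'a measure \<Rightarrow> (real \<Rightarrow> 'a measure) \<Rightarrow> real \<Rightarrow> nat \<Rightarrow> (nat \<Rightarrow> real)
     \<Rightarrow> (nat \<Rightarrow> 'a \<Rightarrow> real ^ 'd ^ 'n) \<Rightarrow> bool" where
  "valid_simple M F T k s \<xi> \<longleftrightarrow>
     s 0 = 0 \<and> s k = T \<and> (\<forall>i<k. s i < s (Suc i)) \<and>
     (\<forall>i<k. \<xi> i \<in> borel_measurable (F (s i)) \<and> bounded (\<xi> i ` space M))"

definition simple_proc ::
  "nat \<Rightarrow> (nat \<Rightarrow> real) \<Rightarrow> (nat \<Rightarrow> 'a \<Rightarrow> real ^ 'd ^ 'n) \<Rightarrow> real \<Rightarrow> 'a \<Rightarrow> real ^ 'd ^ 'n" where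
  "simple_proc k s \<xi> t \<omega> = (\<Sum>i<k. if s i \<le> t \<and> t < s (Suc i) then \<xi> i \<omega> else 0)"

definition simple_int ::
  "(real \<Rightarrow> 'a \<Rightarrow> real ^ 'd) \<Rightarrow> nat \<Rightarrow> (nat \<Rightarrow> real) \<Rightarrow> (nat \<Rightarrow> 'a \<Rightarrow> real ^ 'd ^ 'n)
     \<Rightarrow> real \<Rightarrow> 'a \<Rightarrow> real ^ 'n" where
  "simple_int w k s \<xi> t \<omega> =
     (\<Sum>i<k. \<xi> i \<omega> *v (w (min (s (Suc i)) t) \<omega> - w (min (s i) t) \<omega>))"

text \<open>I t = \<integral>_0^t G dw for t in [0,T]: there are simple processes converging to G in
  L2(\<Omega> \<times> [0,T]) whose integrals converge to I t in L2(\<Omega>) for each t.\<close>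
definition ito_integral ::
  "'a measure \<Rightarrow> (real \<Rightarrow> 'a measure) \<Rightarrow> (real \<Rightarrow> 'a \<Rightarrow> real ^ 'd) \<Rightarrow> real
     \<Rightarrow> (real \<Rightarrow> 'a \<Rightarrow> real ^ 'd ^ 'n) \<Rightarrow> (real \<Rightarrow> 'a \<Rightarrow> real ^ 'n) \<Rightarrow> bool" where
  "ito_integral M F w T G I \<longleftrightarrow>
     progressive F T G \<and>
     (\<forall>t\<in>{0..T}. I t \<in> borel_measurable M) \<and>
     (\<exists>K S \<Xi>. (\<forall>k. valid_simple M F T (K k) (S k) (\<Xi> k)) \<and>
        ((\<lambda>k. \<integral>\<^sup>+\<omega>. (\<integral>\<^sup>+t\<in>{0..T}.
              ennreal ((norm (simple_proc (K k) (S k) (\<Xi> k) t \<omega> - G t \<omega>))\<^sup>2) \<partial>lborel) \<partial>M)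
           \<longlonglongrightarrow> 0) \<and>
        (\<forall>t\<in>{0..T}. (\<lambda>k. \<integral>\<^sup>+\<omega>. ennreal ((norm (I t \<omega> - simple_int w (K k) (S k) (\<Xi> k) t \<omega>))\<^sup>2) \<partial>M)
           \<longlonglongrightarrow> 0))"

definition sde_solution ::
  "'a measure \<Rightarrow> (real \<Rightarrow> 'a measure) \<Rightarrow> (real \<Rightarrow> 'a \<Rightarrow> real ^ 'd) \<Rightarrow> real
     \<Rightarrow> (real \<Rightarrow> real ^ 'n \<Rightarrow> 'u \<Rightarrow> real ^ 'n) \<Rightarrow> (real \<Rightarrow> real ^ 'n \<Rightarrow> 'u \<Rightarrow> real ^ 'd ^ 'n)
     \<Rightarrow> (real \<Rightarrow> 'a \<Rightarrow> 'u) \<Rightarrow> (real \<Rightarrow> 'a \<Rightarrow> real ^ 'n) \<Rightarrow> bool" where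
  "sde_solution M F w T f G u x \<longleftrightarrow>
     (\<forall>t\<in>{0..T}. x t \<in> borel_measurable (F t)) \<and>
     (AE \<omega> in M. continuous_on {0..T} (\<lambda>t. x t \<omega>)) \<and>
     progressive F T (\<lambda>t \<omega>. f t (x t \<omega>) (u t \<omega>)) \<and>
     (AE \<omega> in M. set_integrable lborel {0..T} (\<lambda>s. f s (x s \<omega>) (u s \<omega>))) \<and>
     (\<exists>I. ito_integral M F w T (\<lambda>t \<omega>. G t (x t \<omega>) (u t \<omega>)) I \<and>
        (\<forall>t\<in>{0..T}. AE \<omega> in M.
           x t \<omega> = x 0 \<omega> + (LINT s:{0..t}|lborel. f s (x s \<omega>) (u s \<omega>)) + I t \<omega>))"

definition is_partition :: "real \<Rightarrow> nat \<Rightarrow> (nat \<Rightarrow> real) \<Rightarrow> bool" where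
  "is_partition T k tp \<longleftrightarrow> tp 0 = 0 \<and> tp k = T \<and> (\<forall>i<k. tp i < tp (Suc i))"

definition mesh :: "nat \<Rightarrow> (nat \<Rightarrow> real) \<Rightarrow> real" where
  "mesh k tp = Max ((\<lambda>i. tp (Suc i) - tp i) ` {..<k})"

definition grid_pt :: "nat \<Rightarrow> (nat \<Rightarrow> real) \<Rightarrow> real \<Rightarrow> real" where
  "grid_pt k tp s = tp (GREATEST i. i \<le> k \<and> tp i \<le> s)"

definition yhat ::
  "('m \<Rightarrow> real ^ 'n \<Rightarrow> real) \<Rightarrow> ('m \<Rightarrow> real ^ 'n \<Rightarrow> real ^ 'n) \<Rightarrow> ('m \<Rightarrow> real ^ 'n \<Rightarrow> real ^ 'n ^ 'n)
   \<Rightarrow> (real \<Rightarrow> real ^ 'n \<Rightarrow> 'u \<Rightarrow> real ^ 'n) \<Rightarrow> (real \<Rightarrow> real ^ 'n \<Rightarrow> 'u \<Rightarrow> real ^ 'd ^ 'n)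
   \<Rightarrow> (real \<Rightarrow> 'a \<Rightarrow> real ^ 'n) \<Rightarrow> (real \<Rightarrow> 'a \<Rightarrow> 'u) \<Rightarrow> (real \<Rightarrow> 'a \<Rightarrow> real ^ 'd)
   \<Rightarrow> nat \<Rightarrow> (nat \<Rightarrow> real) \<Rightarrow> real \<Rightarrow> 'a \<Rightarrow> real ^ 'm" where
  "yhat g a H f G x u w k tp s \<omega> =
     (let t = grid_pt k tp s;
          xt = x t \<omega>; ft = f t xt (u t \<omega>); Gt = G t xt (u t \<omega>);
          y = (\<chi> j. g j xt);
          h = (\<chi> j. a j xt \<bullet> ft + 1/2 * trace (transpose Gt ** H j xt ** Gt));
          \<Sigma> = (\<chi> j. a j xt v* Gt)
      in y + (s - t) *\<^sub>R h + \<Sigma> *v (w s \<omega> - w t \<omega>))"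

text \<open>z^n converges \<epsilon>_n-pathwise-uniformly to z on [0,T]. The probability of the
  (possibly non-measurable) event is taken as outer probability.\<close>
definition pathwise_uniform_conv ::
  "'a measure \<Rightarrow> real \<Rightarrow> (nat \<Rightarrow> real) \<Rightarrow> (nat \<Rightarrow> real \<Rightarrow> 'a \<Rightarrow> 'b::real_normed_vector)
     \<Rightarrow> (real \<Rightarrow> 'a \<Rightarrow> 'b) \<Rightarrow> bool" where
  "pathwise_uniform_conv M T \<epsilon> zn z \<longleftrightarrow>
     (\<exists>Mw::'a \<Rightarrow> real. Mw \<in> borel_measurable M \<and> (AE \<omega> in M. 0 < Mw \<omega>) \<and>
        (\<exists>E. (\<forall>n. E n \<in> sets M) \<and>
           (\<forall>n. {\<omega>\<in>space M. \<exists>s\<in>{0..T}. norm (zn n s \<omega> - z s \<omega>) > \<epsilon> n * Mw \<omega>} \<subseteq> E n) \<and>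
           (\<lambda>n. measure M (E n)) \<longlonglongrightarrow> 0))"

end

theory Submission
  imports Defs
begin

lemma cont_mmult[continuous_intros]:
  fixes f :: "'x::topological_space \<Rightarrow> real^'k^'m" and g :: "'x \<Rightarrow> real^'n^'k"
  assumes "continuous_on S f" "continuous_on S g"
  shows "continuous_on S (\<lambda>x. f x ** g x)"
  unfolding matrix_matrix_mult_def by (intro continuous_intros assms)

lemma cont_transpose[continuous_intros]:
  fixes f :: "'x::topological_space \<Rightarrow> real^'k^'m"
  assumes "continuous_on S f"
  shows "continuous_on S (\<lambda>x. transpose (f x))"
  unfolding transpose_def by (intro continuous_intros assms)

lemma cont_trace[continuous_intros]:
  fixes f :: "'x::topological_space \<Rightarrow> real^'m^'m"
  assumes "continuous_on S f"
  shows "continuous_on S (\<lambda>x. trace (f x))"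
  unfolding trace_def by (intro continuous_intros assms)

lemma cont_vmult[continuous_intros]:
  fixes f :: "'x::topological_space \<Rightarrow> real^'m" and g :: "'x \<Rightarrow> real^'n^'m"
  assumes "continuous_on S f" "continuous_on S g"
  shows "continuous_on S (\<lambda>x. f x v* g x)"
  unfolding vector_matrix_mult_def by (intro continuous_intros assms)

lemma cont_mvmult[continuous_intros]:
  fixes f :: "'x::topological_space \<Rightarrow> real^'n^'m" and g :: "'x \<Rightarrow> real^'n"
  assumes "continuous_on S f" "continuous_on S g"
  shows "continuous_on S (\<lambda>x. f x *v g x)"
  unfolding matrix_vector_mult_def by (intro continuous_intros assms)

lemma prog_section:
  assumes "progressive F T X" "t \<in> {0..T}" "is_filtration M F"
  shows "X t \<in> borel_measurable M"
proof -
  have j: "(\<lambda>(s, \<omega>). X s \<omega>) \<in> borel_measurable (restrict_space borel {0..T} \<Otimes>\<^sub>M F T)"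
    using assms(1,2) unfolding progressive_def by auto
  have p: "Pair t \<in> measurable (F T) (restrict_space borel {0..T} \<Otimes>\<^sub>M F T)"
    by (rule measurable_Pair1') (use assms(2) in auto)
  have "(\<lambda>\<omega>. X t \<omega>) \<in> borel_measurable (F T)"
    using measurable_comp[OF p j] by (simp add: comp_def)
  moreover have "subalgebra M (F T)" using assms(3) unfolding is_filtration_def subalgebra_def by auto
  ultimately show ?thesis using measurable_from_subalg by blast
qed

lemma filt_meas:
  assumes "is_filtration M F" "X \<in> borel_measurable (F t)"
  shows "X \<in> borel_measurable M"
proof -
  have "subalgebra M (F t)" using assms(1) unfolding is_filtration_def subalgebra_def by auto
  then show ?thesis using measurable_from_subalg assms(2) by blast
qed

lemma part_mono:
  assumes "is_partition T k tp" "i \<le> j" "j \<le> k"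
  shows "tp i \<le> tp j"
  using assms(2,3)
proof (induction j)
  case 0 then show ?case by simp
next
  case (Suc j)
  show ?case
  proof (cases "i = Suc j")
    case False
    then have "i \<le> j" using Suc by simp
    then have "tp i \<le> tp j" using Suc by simp
    also have "tp j < tp (Suc j)" using assms(1) Suc(3) unfolding is_partition_def by auto
    finally show ?thesis by simp
  qed simp
qed

lemma grid_obtain:
  assumes "is_partition T k tp" "0 \<le> s"
  obtains i where "i \<le> k" "grid_pt k tp s = tp i" "tp i \<le> s" "i < k \<Longrightarrow> s < tp (Suc i)"
proof -
  let ?P = "\<lambda>i. i \<le> k \<and> tp i \<le> s"
  have P0: "?P 0" using assms unfolding is_partition_def by simp
  have bd: "\<forall>y. ?P y \<longrightarrow> y \<le> k" by simp
  define i where "i = (GREATEST i. ?P i)"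
  have Pi: "?P i" unfolding i_def by (rule GreatestI_nat[where P="?P", OF P0, of k]) simp
  have mx: "\<And>y. ?P y \<Longrightarrow> y \<le> i" unfolding i_def by (rule Greatest_le_nat[where b=k]) auto
  have "i < k \<Longrightarrow> s < tp (Suc i)"
  proof (rule ccontr)
    assume "i < k" "\<not> s < tp (Suc i)"
    then have "?P (Suc i)" by simp
    then show False using mx[of "Suc i"] by simp
  qed
  then show ?thesis using that[of i] Pi unfolding grid_pt_def i_def by auto
qed

lemma grid_const:
  assumes "is_partition T k tp" "i < k" "tp i \<le> s" "s < tp (Suc i)"
  shows "grid_pt k tp s = tp i"
proof -
  have "(GREATEST j. j \<le> k \<and> tp j \<le> s) = i"
  proof (rule Greatest_equality)
    show "i \<le> k \<and> tp i \<le> s" using assms by simp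
    fix y assume y: "y \<le> k \<and> tp y \<le> s"
    show "y \<le> i"
    proof (rule ccontr)
      assume "\<not> y \<le> i"
      then have "tp (Suc i) \<le> tp y" using part_mono[OF assms(1), of "Suc i" y] y by simp
      then show False using y assms(4) by simp
    qed
  qed
  then show ?thesis unfolding grid_pt_def by simp
qed

lemma mesh_ge:
  assumes "i < k"
  shows "tp (Suc i) - tp i \<le> mesh k tp"
  unfolding mesh_def using assms by (intro Max_ge) auto

lemma grid_bounds:
  assumes "is_partition T k tp" "0 < T" "0 \<le> s" "s \<le> T"
  shows "0 \<le> grid_pt k tp s" "grid_pt k tp s \<le> s" "s - grid_pt k tp s \<le> mesh k tp"
proof -
  obtain i where i: "i \<le> k" "grid_pt k tp s = tp i" "tp i \<le> s" "i < k \<Longrightarrow> s < tp (Suc i)"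
    using grid_obtain[OF assms(1,3)] by blast
  have "tp 0 \<le> tp i" using part_mono[OF assms(1)] i by simp
  then show "0 \<le> grid_pt k tp s" using assms(1) i unfolding is_partition_def by simp
  show "grid_pt k tp s \<le> s" using i by simp
  have k0: "0 < k" using assms(1,2) unfolding is_partition_def by (cases k) auto
  have mpos: "0 \<le> mesh k tp"
  proof -
    have "tp (Suc 0) - tp 0 \<le> mesh k tp" using mesh_ge k0 by blast
    moreover have "tp 0 < tp (Suc 0)" using assms(1) k0 unfolding is_partition_def by auto
    ultimately show ?thesis by simp
  qed
  show "s - grid_pt k tp s \<le> mesh k tp"
  proof (cases "i < k")
    case True
    then show ?thesis using i mesh_ge[OF True, of tp] by simp
  next
    case False
    then have "i = k" using i by simp
    then have "tp i = T" using assms(1) unfolding is_partition_def by simp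
    then show ?thesis using i assms mpos by simp
  qed
qed

definition Yv :: "('m \<Rightarrow> real ^ 'n \<Rightarrow> real) \<Rightarrow> (real \<Rightarrow> 'a \<Rightarrow> real ^ 'n) \<Rightarrow> real \<Rightarrow> 'a \<Rightarrow> real ^ 'm" where
  "Yv g x t \<omega> = (\<chi> j. g j (x t \<omega>))"

definition hv :: "('m \<Rightarrow> real ^ 'n \<Rightarrow> real ^ 'n) \<Rightarrow> ('m \<Rightarrow> real ^ 'n \<Rightarrow> real ^ 'n ^ 'n)
   \<Rightarrow> (real \<Rightarrow> real ^ 'n \<Rightarrow> 'u \<Rightarrow> real ^ 'n) \<Rightarrow> (real \<Rightarrow> real ^ 'n \<Rightarrow> 'u \<Rightarrow> real ^ 'd ^ 'n)
   \<Rightarrow> (real \<Rightarrow> 'a \<Rightarrow> real ^ 'n) \<Rightarrow> (real \<Rightarrow> 'a \<Rightarrow> 'u) \<Rightarrow> real \<Rightarrow> 'a \<Rightarrow> real ^ 'm" where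
  "hv a H f G x u t \<omega> = (\<chi> j. a j (x t \<omega>) \<bullet> f t (x t \<omega>) (u t \<omega>) + 1/2 *
      trace (transpose (G t (x t \<omega>) (u t \<omega>)) ** H j (x t \<omega>) ** G t (x t \<omega>) (u t \<omega>)))"

definition Sv :: "('m \<Rightarrow> real ^ 'n \<Rightarrow> real ^ 'n) 
   \<Rightarrow> (real \<Rightarrow> real ^ 'n \<Rightarrow> 'u \<Rightarrow> real ^ 'd ^ 'n)
   \<Rightarrow> (real \<Rightarrow> 'a \<Rightarrow> real ^ 'n) \<Rightarrow> (real \<Rightarrow> 'a \<Rightarrow> 'u) \<Rightarrow> real \<Rightarrow> 'a \<Rightarrow> real ^ 'd ^ 'm" where
  "Sv a G x u t \<omega> = (\<chi> j. a j (x t \<omega>) v* G t (x t \<omega>) (u t \<omega>))"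

lemma yhat_eq:
  assumes "grid_pt k tp s = t"
  shows "yhat g a H f G x u w k tp s \<omega> =
    Yv g x t \<omega> + (s - t) *\<^sub>R hv a H f G x u t \<omega> + Sv a G x u t \<omega> *v (w s \<omega> - w t \<omega>)"
  using assms unfolding yhat_def Yv_def hv_def Sv_def Let_def by simp

lemma D_meas:
  fixes g :: "'m::finite \<Rightarrow> real ^ 'n \<Rightarrow> real" and x :: "real \<Rightarrow> 'a \<Rightarrow> real ^ 'n"
    and w :: "real \<Rightarrow> 'a \<Rightarrow> real ^ 'd"
    and f :: "real \<Rightarrow> real ^ 'n \<Rightarrow> 'u \<Rightarrow> real ^ 'n"
    and G :: "real \<Rightarrow> real ^ 'n \<Rightarrow> 'u \<Rightarrow> real ^ 'd ^ 'n"
  assumes cg: "\<And>j. continuous_on UNIV (g j)" and ca: "\<And>j. continuous_on UNIV (a j)"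
    and cH: "\<And>j. continuous_on UNIV (H j)"
    and m1: "x t \<in> borel_measurable M" and m2: "x s \<in> borel_measurable M"
    and m3: "(\<lambda>\<omega>. f t (x t \<omega>) (u t \<omega>)) \<in> borel_measurable M"
    and m4: "(\<lambda>\<omega>. G t (x t \<omega>) (u t \<omega>)) \<in> borel_measurable M"
    and m5: "w s \<in> borel_measurable M" and m6: "w t \<in> borel_measurable M"
  shows "(\<lambda>\<omega>. norm (Yv g x t \<omega> + (s - t) *\<^sub>R hv a H f G x u t \<omega> + Sv a G x u t \<omega> *v (w s \<omega> - w t \<omega>)
            - Yv g x s \<omega>)) \<in> borel_measurable M"
proof -
  define \<Phi> where "\<Phi> = (\<lambda>(xt::real^'n, ft::real^'n, Gt::real^'d^'n, ws::real^'d, wt::real^'d, xs::real^'n).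
     norm ((\<chi> j. g j xt) + (s - t) *\<^sub>R (\<chi> j. a j xt \<bullet> ft + 1/2 * trace (transpose Gt ** H j xt ** Gt))
       + (\<chi> j. a j xt v* Gt) *v (ws - wt) - (\<chi> j. g j xs)))"
  have cg': "\<And>j h S. continuous_on S h \<Longrightarrow> continuous_on S (\<lambda>z. g j (h z))"
    using continuous_on_compose2[OF cg] by blast
  have ca': "\<And>j h S. continuous_on S h \<Longrightarrow> continuous_on S (\<lambda>z. a j (h z))"
    using continuous_on_compose2[OF ca] by blast
  have cH': "\<And>j h S. continuous_on S h \<Longrightarrow> continuous_on S (\<lambda>z. H j (h z))"
    using continuous_on_compose2[OF cH] by blast
  have c: "continuous_on UNIV \<Phi>"
    unfolding \<Phi>_def case_prod_beta
    by (intro continuous_intros cg' ca' cH')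
  have t: "(\<lambda>\<omega>. (x t \<omega>, f t (x t \<omega>) (u t \<omega>), G t (x t \<omega>) (u t \<omega>), w s \<omega>, w t \<omega>, x s \<omega>)) \<in> borel_measurable M"
    using m1 m2 m3 m4 m5 m6 by measurable
  have "(\<lambda>\<omega>. \<Phi> (x t \<omega>, f t (x t \<omega>) (u t \<omega>), G t (x t \<omega>) (u t \<omega>), w s \<omega>, w t \<omega>, x s \<omega>)) \<in> borel_measurable M"
    by (rule borel_measurable_continuous_on[OF c t])
  then show ?thesis unfolding \<Phi>_def Yv_def hv_def Sv_def by simp
qed

lemma bdd_cont:
  fixes \<phi> :: "'x::topological_space \<Rightarrow> 'y::real_normed_vector"
  assumes "continuous_on UNIV \<phi>" "compact K" "\<And>t. t \<in> A \<Longrightarrow> p t \<in> K"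
  shows "\<exists>C. \<forall>t\<in>A. norm (\<phi> (p t)) \<le> C"
proof -
  have "compact (\<phi> ` K)" using assms(1,2) by (meson compact_continuous_image continuous_on_subset subset_UNIV)
  then have "bounded (\<phi> ` K)" by (rule compact_imp_bounded)
  then obtain C where "\<forall>y\<in>\<phi> ` K. norm y \<le> C" unfolding bounded_iff by blast
  then show ?thesis using assms(3) by blast
qed

lemma bdd_path:
  fixes X :: "real \<Rightarrow> 'y::real_normed_vector"
  assumes "continuous_on {0..T} X"
  shows "\<exists>C. \<forall>t\<in>{0..T}. norm (X t) \<le> C"
proof -
  have "compact (X ` {0..T})" using assms compact_continuous_image compact_Icc by blast
  then have "bounded (X ` {0..T})" by (rule compact_imp_bounded)
  then show ?thesis unfolding bounded_iff by blast
qed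

lemma path_bounds:
  fixes x :: "real \<Rightarrow> 'a \<Rightarrow> real ^ 'n" and u :: "real \<Rightarrow> 'a \<Rightarrow> real ^ 'nu"
    and f :: "real \<Rightarrow> real ^ 'n \<Rightarrow> real ^ 'nu \<Rightarrow> real ^ 'n"
    and G :: "real \<Rightarrow> real ^ 'n \<Rightarrow> real ^ 'nu \<Rightarrow> real ^ 'd ^ 'n"
    and a :: "'m::finite \<Rightarrow> real ^ 'n \<Rightarrow> real ^ 'n"
    and H :: "'m \<Rightarrow> real ^ 'n \<Rightarrow> real ^ 'n ^ 'n"
  assumes contX: "continuous_on {0..T} (\<lambda>t. x t \<omega>)"
    and fb: "\<forall>t\<in>{0..T}. norm (f t (x t \<omega>) (u t \<omega>)) \<le> Bf"
    and ca: "continuous_on UNIV (a j)" and cH: "continuous_on UNIV (H j)"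
    and hess: "\<And>z. (a j has_derivative (\<lambda>h. H j z *v h)) (at z)"
    and ctrl: "(\<exists>\<kappa> :: real \<Rightarrow> real ^ 'n \<Rightarrow> real ^ 'nu. \<exists>L. L-lipschitz_on UNIV (\<lambda>(t, z). \<kappa> t z) \<and>
          (\<forall>t\<in>{0..T}. u t \<omega> = \<kappa> t (x t \<omega>)))
      \<or> (\<forall>t z v v'. a j z \<bullet> f t z v = a j z \<bullet> f t z v' \<and> a j z v* G t z v = a j z v* G t z v')"
    and paired: "((\<exists>G0. \<forall>t z v. G t z v = G0) \<and> (\<exists>L. L-lipschitz_on UNIV (a j)))
      \<or> ((\<exists>a0. \<forall>z. a j z = a0) \<and> (\<exists>L. L-lipschitz_on UNIV (\<lambda>(t, z, v). G t z v)))
      \<or> (bounded (range (a j)) \<and> (\<exists>L. L-lipschitz_on UNIV (a j)) \<and>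
         bounded (range (\<lambda>(t, z, v). G t z v)) \<and> (\<exists>L. L-lipschitz_on UNIV (\<lambda>(t, z, v). G t z v)))"
  shows "\<exists>C. \<forall>t\<in>{0..T}. \<bar>hv a H f G x u t \<omega> $ j\<bar> \<le> C \<and> norm (Sv a G x u t \<omega> $ j) \<le> C"
proof -
  let ?X = "\<lambda>t. x t \<omega>"
  let ?Gt = "\<lambda>t. G t (x t \<omega>) (u t \<omega>)"
  let ?ft = "\<lambda>t. f t (x t \<omega>) (u t \<omega>)"
  have cpX: "compact (?X ` {0..T})" using contX compact_continuous_image compact_Icc by blast
  have ca': "\<And>h S. continuous_on S h \<Longrightarrow> continuous_on S (\<lambda>z. a j (h z))"
    using continuous_on_compose2[OF ca] by blast
  have cH': "\<And>h S. continuous_on S h \<Longrightarrow> continuous_on S (\<lambda>z. H j (h z))"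
    using continuous_on_compose2[OF cH] by blast
  have main: "\<exists>C. \<forall>t\<in>{0..T}. \<bar>hv a H f G x u t \<omega> $ j\<bar> \<le> C \<and> norm (Sv a G x u t \<omega> $ j) \<le> C"
    if R: "\<forall>t\<in>{0..T}. norm (?Gt t) \<le> R" for R
  proof -
    define \<phi>1 where "\<phi>1 = (\<lambda>(z::real^'n, fv::real^'n, Gm::real^'d^'n). a j z \<bullet> fv + 1/2 * trace (transpose Gm ** H j z ** Gm))"
    define \<phi>2 where "\<phi>2 = (\<lambda>(z::real^'n, Gm::real^'d^'n). a j z v* Gm)"
    have c1: "continuous_on UNIV \<phi>1" unfolding \<phi>1_def case_prod_beta by (intro continuous_intros ca' cH')
    have c2: "continuous_on UNIV \<phi>2" unfolding \<phi>2_def case_prod_beta by (intro continuous_intros ca')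
    obtain C1 where C1: "\<forall>t\<in>{0..T}. norm (\<phi>1 (?X t, ?ft t, ?Gt t)) \<le> C1"
      using bdd_cont[OF c1 compact_Times[OF cpX compact_Times[OF compact_cball[of 0 Bf] compact_cball[of 0 R]]], of "{0..T}" "\<lambda>t. (?X t, ?ft t, ?Gt t)"]
        fb R by (auto simp: dist_norm)
    obtain C2 where C2: "\<forall>t\<in>{0..T}. norm (\<phi>2 (?X t, ?Gt t)) \<le> C2"
      using bdd_cont[OF c2 compact_Times[OF cpX compact_cball[of 0 R]], of "{0..T}" "\<lambda>t. (?X t, ?Gt t)"]
        R by (auto simp: dist_norm)
    show ?thesis
      apply (rule exI[of _ "max C1 C2"])
      using C1 C2 unfolding \<phi>1_def \<phi>2_def hv_def Sv_def by fastforce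
  qed
  show ?thesis
  proof (cases "\<exists>R. \<forall>t\<in>{0..T}. norm (?Gt t) \<le> R")
    case True
    then show ?thesis using main by blast
  next
    case False
    have p2: "(\<exists>a0. \<forall>z. a j z = a0) \<and> (\<exists>L. L-lipschitz_on UNIV (\<lambda>(t, z, v). G t z v))"
    proof -
      have "\<not> (\<exists>G0. \<forall>t z v. G t z v = G0)"
      proof
        assume "\<exists>G0. \<forall>t z v. G t z v = G0"
        then obtain G0 where "\<forall>t z v. G t z v = G0" by blast
        then show False using False by auto
      qed
      moreover have "\<not> bounded (range (\<lambda>(t, z, v). G t z v))"
      proof
        assume "bounded (range (\<lambda>(t, z, v). G t z v))"
        then obtain R where "\<forall>y\<in>range (\<lambda>(t, z, v). G t z v). norm y \<le> R" unfolding bounded_iff by blast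
        then have "\<forall>t\<in>{0..T}. norm (?Gt t) \<le> R"
          by (metis (no_types, lifting) case_prod_conv rangeI)
        then show False using False by blast
      qed
      ultimately show ?thesis using paired by blast
    qed
    then obtain a0 L where a0: "\<forall>z. a j z = a0" and L: "L-lipschitz_on UNIV (\<lambda>(t, z, v). G t z v)" by blast
    have cG: "continuous_on UNIV (\<lambda>(t, z, v). G t z v)" using L lipschitz_on_continuous_on by blast
    have cG': "\<And>h S. continuous_on S h \<Longrightarrow> continuous_on S (\<lambda>p. (\<lambda>(t, z, v). G t z v) (h p))"
      using continuous_on_compose2[OF cG] by blast
    show ?thesis
    proof (cases "\<exists>\<kappa> :: real \<Rightarrow> real ^ 'n \<Rightarrow> real ^ 'nu. \<exists>L. L-lipschitz_on UNIV (\<lambda>(t, z). \<kappa> t z) \<and>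
          (\<forall>t\<in>{0..T}. u t \<omega> = \<kappa> t (x t \<omega>))")
      case True
      then obtain \<kappa> :: "real \<Rightarrow> real ^ 'n \<Rightarrow> real ^ 'nu" and L' where
        k: "L'-lipschitz_on UNIV (\<lambda>(t, z). \<kappa> t z)" "\<forall>t\<in>{0..T}. u t \<omega> = \<kappa> t (x t \<omega>)" by blast
      have ck: "continuous_on UNIV (\<lambda>(t, z). \<kappa> t z)" using k(1) lipschitz_on_continuous_on by blast
      have ck': "\<And>h S. continuous_on S h \<Longrightarrow> continuous_on S (\<lambda>p. (\<lambda>(t, z). \<kappa> t z) (h p))"
        using continuous_on_compose2[OF ck] by blast
      have "continuous_on {0..T} (\<lambda>t. (\<lambda>(t, z, v). G t z v) (t, ?X t, (\<lambda>(t, z). \<kappa> t z) (t, ?X t)))"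
        by (intro cG' ck' continuous_intros contX)
      from bdd_path[OF this] obtain R where
        "\<forall>t\<in>{0..T}. norm ((\<lambda>(t, z, v). G t z v) (t, ?X t, (\<lambda>(t, z). \<kappa> t z) (t, ?X t))) \<le> R" by blast
      then have "\<forall>t\<in>{0..T}. norm (?Gt t) \<le> R" using k(2) by simp
      then show ?thesis using False by blast
    next
      case False2: False
      then have indep: "\<forall>t z v v'. a j z v* G t z v = a j z v* G t z v'" using ctrl by blast
      have H0: "H j z = 0" for z
      proof -
        have "(a j has_derivative (\<lambda>h. 0)) (at z)"
        proof -
          have "a j = (\<lambda>_. a0)" using a0 by auto
          then show ?thesis by simp
        qed
        from has_derivative_unique[OF hess this] have "\<And>h. H j z *v h = 0" by meson
        then show ?thesis by (intro matrix_eq[THEN iffD2]) simp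
      qed
      have "continuous_on {0..T} (\<lambda>t. a0 v* (\<lambda>(t, z, v). G t z v) (t, ?X t, 0))"
        by (intro cG' continuous_intros contX)
      from bdd_path[OF this] obtain R where
        R: "\<forall>t\<in>{0..T}. norm (a0 v* (\<lambda>(t, z, v). G t z v) (t, ?X t, 0)) \<le> R" by blast
      show ?thesis
      proof (rule exI[of _ "max R (norm a0 * Bf)"], intro ballI conjI)
        fix t assume t: "t \<in> {0..T}"
        have "hv a H f G x u t \<omega> $ j = a0 \<bullet> ?ft t"
          unfolding hv_def using a0 H0 by (simp add: trace_def)
        also have "\<bar>\<dots>\<bar> \<le> norm a0 * norm (?ft t)" by (rule Cauchy_Schwarz_ineq2)
        also have "\<dots> \<le> norm a0 * Bf" using fb t by (simp add: mult_left_mono)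
        finally show "\<bar>hv a H f G x u t \<omega> $ j\<bar> \<le> max R (norm a0 * Bf)" by simp
        have "Sv a G x u t \<omega> $ j = a0 v* (\<lambda>(t, z, v). G t z v) (t, ?X t, 0)"
          unfolding Sv_def using indep[rule_format, of "x t \<omega>" t "u t \<omega>" 0] a0 by simp
        then show "norm (Sv a G x u t \<omega> $ j) \<le> max R (norm a0 * Bf)" using R t by (simp add: max.coboundedI1)
      qed
    qed
  qed
qed

lemma comb_bounds:
  fixes h :: "real \<Rightarrow> real ^ 'm::finite" and S :: "real \<Rightarrow> real ^ 'd ^ 'm"
  assumes "\<And>j. \<exists>C. \<forall>t\<in>A. \<bar>h t $ j\<bar> \<le> C \<and> norm (S t $ j) \<le> C"
  shows "\<exists>B\<ge>0. \<forall>t\<in>A. norm (h t) \<le> B \<and> (\<forall>v. norm (S t *v v) \<le> B * norm v)"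
proof -
  have "\<forall>j. \<exists>C. \<forall>t\<in>A. \<bar>h t $ j\<bar> \<le> C \<and> norm (S t $ j) \<le> C" using assms by blast
  then obtain C where C: "\<And>j. \<forall>t\<in>A. \<bar>h t $ j\<bar> \<le> C j \<and> norm (S t $ j) \<le> C j"
    by (subst (asm) choice_iff) blast
  define B where "B = (\<Sum>j\<in>UNIV. \<bar>C j\<bar>)"
  have "0 \<le> B" unfolding B_def by (simp add: sum_nonneg)
  moreover have "norm (h t) \<le> B \<and> (\<forall>v. norm (S t *v v) \<le> B * norm v)" if t: "t \<in> A" for t
  proof
    have "norm (h t) \<le> (\<Sum>j\<in>UNIV. \<bar>h t $ j\<bar>)" by (rule norm_le_l1_cart)
    also have "\<dots> \<le> B" unfolding B_def using C t by (intro sum_mono) (meson abs_ge_self order_trans)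
    finally show "norm (h t) \<le> B" .
    show "\<forall>v. norm (S t *v v) \<le> B * norm v"
    proof
      fix v
      have "norm (S t *v v) \<le> (\<Sum>j\<in>UNIV. \<bar>(S t *v v) $ j\<bar>)" by (rule norm_le_l1_cart)
      also have "\<dots> = (\<Sum>j\<in>UNIV. \<bar>S t $ j \<bullet> v\<bar>)" by (simp add: matrix_vector_mul_component)
      also have "\<dots> \<le> (\<Sum>j\<in>UNIV. \<bar>C j\<bar> * norm v)"
      proof (intro sum_mono)
        fix j
        have "\<bar>S t $ j \<bullet> v\<bar> \<le> norm (S t $ j) * norm v" by (rule Cauchy_Schwarz_ineq2)
        also have "\<dots> \<le> \<bar>C j\<bar> * norm v" using C[of j] t by (intro mult_right_mono) force+
        finally show "\<bar>S t $ j \<bullet> v\<bar> \<le> \<bar>C j\<bar> * norm v" .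
      qed
      also have "\<dots> = B * norm v" unfolding B_def by (simp add: sum_distrib_right)
      finally show "norm (S t *v v) \<le> B * norm v" .
    qed
  qed
  ultimately show ?thesis by blast
qed

lemma rearr: "(a::'v::ab_group_add) + b + c - d = (a - d) + b + c"
  by (simp add: algebra_simps)

lemma det_conv:
  assumes T0: "0 < T" and part: "\<And>n. is_partition T (k n) (tp n)"
    and mesh0: "(\<lambda>n. mesh (k n) (tp n)) \<longlonglongrightarrow> 0"
    and contY: "continuous_on {0..T} (\<lambda>t. Yv g x t \<omega>)"
    and contW: "continuous_on {0..T} (\<lambda>t. w t \<omega>)"
    and B: "0 \<le> B" "\<forall>t\<in>{0..T}. norm (hv a H f G x u t \<omega>) \<le> B \<and> (\<forall>v. norm (Sv a G x u t \<omega> *v v) \<le> B * norm v)"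
    and e: "0 < e"
  shows "\<exists>N. \<forall>n\<ge>N. \<forall>s\<in>{0..T}. norm (yhat g a H f G x u w (k n) (tp n) s \<omega> - Yv g x s \<omega>) \<le> e"
proof -
  have uY: "uniformly_continuous_on {0..T} (\<lambda>t. Yv g x t \<omega>)" using contY compact_uniformly_continuous compact_Icc by blast
  have uW: "uniformly_continuous_on {0..T} (\<lambda>t. w t \<omega>)" using contW compact_uniformly_continuous compact_Icc by blast
  obtain d1 where d1: "d1 > 0" "\<forall>s\<in>{0..T}. \<forall>t\<in>{0..T}. dist t s < d1 \<longrightarrow> dist (Yv g x t \<omega>) (Yv g x s \<omega>) < e/3"
  proof -
    have "e/3 > 0" using e by simp
    from uY[unfolded uniformly_continuous_on_def, rule_format, OF this] obtain dd where
      "dd > 0" "\<forall>s\<in>{0..T}. \<forall>t\<in>{0..T}. dist t s < dd \<longrightarrow> dist (Yv g x t \<omega>) (Yv g x s \<omega>) < e/3" by metis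
    then show ?thesis by (rule that)
  qed
  obtain d2 where d2: "d2 > 0" "\<forall>s\<in>{0..T}. \<forall>t\<in>{0..T}. dist t s < d2 \<longrightarrow> dist (w t \<omega>) (w s \<omega>) < e/(3*(B+1))"
  proof -
    have "e/(3*(B+1)) > 0" using e B(1) by simp
    from uW[unfolded uniformly_continuous_on_def, rule_format, OF this] obtain dd where
      "dd > 0" "\<forall>s\<in>{0..T}. \<forall>t\<in>{0..T}. dist t s < dd \<longrightarrow> dist (w t \<omega>) (w s \<omega>) < e/(3*(B+1))" by metis
    then show ?thesis by (rule that)
  qed
  define d where "d = min (min d1 d2) (e/(3*(B+1)))"
  have d: "d > 0" unfolding d_def using d1 d2 e B(1) by auto
  obtain N where N: "\<forall>n\<ge>N. norm (mesh (k n) (tp n) - 0) < d"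
    using mesh0 d unfolding LIMSEQ_def dist_norm by blast
  have "\<forall>n\<ge>N. \<forall>s\<in>{0..T}. norm (yhat g a H f G x u w (k n) (tp n) s \<omega> - Yv g x s \<omega>) \<le> e"
  proof (intro allI impI ballI)
    fix n s assume n: "N \<le> n" and s: "s \<in> {0..T}"
    define t where "t = grid_pt (k n) (tp n) s"
    have tb: "0 \<le> t" "t \<le> s" "s - t \<le> mesh (k n) (tp n)"
      using grid_bounds[OF part T0, of s] s unfolding t_def by auto
    have mn: "mesh (k n) (tp n) < d" using N n by auto
    have t01: "t \<in> {0..T}" using tb s by auto
    have dst: "dist s t < d" using tb mn by (simp add: dist_real_def)
    have "norm (yhat g a H f G x u w (k n) (tp n) s \<omega> - Yv g x s \<omega>) = norm (
       (Yv g x t \<omega> - Yv g x s \<omega>) + (s - t) *\<^sub>R hv a H f G x u t \<omega> + Sv a G x u t \<omega> *v (w s \<omega> - w t \<omega>))"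
      unfolding yhat_eq[OF t_def[symmetric], of g a H f G x u w \<omega>] by (subst rearr) (rule refl)
    also have "\<dots> \<le> norm (Yv g x t \<omega> - Yv g x s \<omega>) + norm ((s - t) *\<^sub>R hv a H f G x u t \<omega>) + norm (Sv a G x u t \<omega> *v (w s \<omega> - w t \<omega>))"
      using norm_triangle_ineq[of "(Yv g x t \<omega> - Yv g x s \<omega>) + (s - t) *\<^sub>R hv a H f G x u t \<omega>" "Sv a G x u t \<omega> *v (w s \<omega> - w t \<omega>)"]
        norm_triangle_ineq[of "Yv g x t \<omega> - Yv g x s \<omega>" "(s - t) *\<^sub>R hv a H f G x u t \<omega>"] by linarith
    also have "\<dots> \<le> e/3 + e/3 + e/3"
    proof (intro add_mono)
      show "norm (Yv g x t \<omega> - Yv g x s \<omega>) \<le> e/3"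
      proof -
        have "dist t s < d1" using dst unfolding d_def by (simp add: dist_commute)
        then have "dist (Yv g x t \<omega>) (Yv g x s \<omega>) < e/3" using d1(2) s t01 by blast
        then show ?thesis by (simp add: dist_norm)
      qed
      have "norm ((s - t) *\<^sub>R hv a H f G x u t \<omega>) = (s - t) * norm (hv a H f G x u t \<omega>)" using tb by simp
      also have "\<dots> \<le> (e/(3*(B+1))) * B"
      proof (rule mult_mono)
        show "s - t \<le> e/(3*(B+1))" using dst tb unfolding d_def dist_real_def by simp
      qed (use B t01 tb e in auto)
      also have "\<dots> \<le> e/3" using B(1) e by (simp add: field_simps)
      finally show "norm ((s - t) *\<^sub>R hv a H f G x u t \<omega>) \<le> e/3" .
      have "norm (Sv a G x u t \<omega> *v (w s \<omega> - w t \<omega>)) \<le> B * norm (w s \<omega> - w t \<omega>)" using B t01 by blast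
      also have "\<dots> \<le> B * (e/(3*(B+1)))"
      proof (rule mult_left_mono)
        have "dist s t < d2" using dst unfolding d_def by simp
        then have "dist (w s \<omega>) (w t \<omega>) < e/(3*(B+1))" using d2(2) s t01 by blast
        then show "norm (w s \<omega> - w t \<omega>) \<le> e/(3*(B+1))" by (simp add: dist_norm)
      qed (use B in auto)
      also have "\<dots> \<le> e/3" using B(1) e by (simp add: field_simps)
      finally show "norm (Sv a G x u t \<omega> *v (w s \<omega> - w t \<omega>)) \<le> e/3" .
    qed
    finally show "norm (yhat g a H f G x u w (k n) (tp n) s \<omega> - Yv g x s \<omega>) \<le> e" by simp
  qed
  then show ?thesis by blast
qed

lemma rat_approx:
  assumes T0: "0 < T" and part: "is_partition T k tp"
    and contX: "continuous_on {0..T} (\<lambda>t. x t \<omega>)" and contW: "continuous_on {0..T} (\<lambda>t. w t \<omega>)"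
    and cg: "\<And>j. continuous_on UNIV (g j)"
    and s: "s \<in> {0..T}"
    and gt: "\<epsilon> < norm (yhat g a H f G x u w k tp s \<omega> - Yv g x s \<omega>)"
  shows "\<exists>q\<in>insert T (\<rat> \<inter> {0..T}). \<epsilon> < norm (yhat g a H f G x u w k tp q \<omega> - Yv g x q \<omega>)"
proof (cases "s = T")
  case True then show ?thesis using gt by blast
next
  case False
  then have sT: "s < T" using s by simp
  obtain i where i: "i \<le> k" "grid_pt k tp s = tp i" "tp i \<le> s" "i < k \<Longrightarrow> s < tp (Suc i)"
    using grid_obtain[OF part, of s] s by auto
  have ik: "i < k"
  proof (rule ccontr)
    assume "\<not> i < k" then have "i = k" using i by simp
    then show False using i(3) sT part unfolding is_partition_def by simp
  qed
  have s1: "s < tp (Suc i)" using i(4) ik by simp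
  have s1T: "tp (Suc i) \<le> T" using part_mono[OF part, of "Suc i" k] ik part unfolding is_partition_def by simp
  define t where "t = tp i"
  define c where "c = (\<lambda>q. norm (Yv g x t \<omega> + (q - t) *\<^sub>R hv a H f G x u t \<omega> + Sv a G x u t \<omega> *v (w q \<omega> - w t \<omega>) - Yv g x q \<omega>))"
  have cg': "\<And>j h S. continuous_on S h \<Longrightarrow> continuous_on S (\<lambda>z. g j (h z))"
    using continuous_on_compose2[OF cg] by blast
  have cc: "continuous_on {0..T} c"
    unfolding c_def Yv_def by (intro continuous_intros cg' contX contW)
  have cs: "c s = norm (yhat g a H f G x u w k tp s \<omega> - Yv g x s \<omega>)"
    unfolding c_def t_def yhat_eq[OF i(2)] ..
  have "c s - \<epsilon> > 0" using cs gt by simp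
  with cc s obtain \<rho> where \<rho>: "\<rho> > 0" "\<forall>q\<in>{0..T}. dist q s < \<rho> \<longrightarrow> dist (c q) (c s) < c s - \<epsilon>"
    unfolding continuous_on_iff by metis
  have "s < min (s + \<rho>) (tp (Suc i))" using \<rho> s1 by simp
  then obtain q where q: "q \<in> \<rat>" "s < q" "q < min (s + \<rho>) (tp (Suc i))"
    using Rats_dense_in_real by blast
  have q0T: "q \<in> {0..T}" using q s s1T by auto
  have "dist (c q) (c s) < c s - \<epsilon>" using \<rho>(2) q0T q by (simp add: dist_real_def)
  then have cq: "\<epsilon> < c q" by (simp add: dist_real_def abs_less_iff)
  have gq: "grid_pt k tp q = t" unfolding t_def using grid_const[OF part ik, of q] i q by simp
  have "c q = norm (yhat g a H f G x u w k tp q \<omega> - Yv g x q \<omega>)"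
    unfolding c_def yhat_eq[OF gq] ..
  then show ?thesis using cq q q0T by auto
qed

lemma kyfan:
  fixes B :: "nat \<Rightarrow> real \<Rightarrow> 'a set"
  assumes P: "prob_space M" and Bm: "\<And>n e. B n e \<in> sets M"
    and mono: "\<And>n e e'. e \<le> e' \<Longrightarrow> B n e' \<subseteq> B n e"
    and conv: "\<And>e. 0 < e \<Longrightarrow> (\<lambda>n. measure M (B n e)) \<longlonglongrightarrow> 0"
  shows "\<exists>\<epsilon>. \<epsilon> \<longlonglongrightarrow> 0 \<and> (\<lambda>n. measure M (B n (\<epsilon> n))) \<longlonglongrightarrow> 0"
proof -
  interpret prob_space M by (rule P)
  define R where "R n = {r::real. 0 < r \<and> measure M (B n r) \<le> r}" for n
  define r where "r n = Inf (R n)" for n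
  have ne: "R n \<noteq> {}" for n proof -
    have "1 \<in> R n" unfolding R_def using prob_le_1 by simp
    then show ?thesis by blast
  qed
  have bdd: "bdd_below (R n)" for n unfolding R_def by (intro bdd_belowI[of _ 0]) auto
  have r0: "0 \<le> r n" for n unfolding r_def by (rule cInf_greatest[OF ne]) (auto simp: R_def)
  define \<epsilon> where "\<epsilon> n = r n + inverse (real (Suc n))" for n
  have mle: "measure M (B n (\<epsilon> n)) \<le> \<epsilon> n" for n
  proof -
    have "r n < \<epsilon> n" unfolding \<epsilon>_def by simp
    then obtain q where q: "q \<in> R n" "q < \<epsilon> n" unfolding r_def using cInf_lessD[OF ne] by blast
    have "measure M (B n (\<epsilon> n)) \<le> measure M (B n q)"
      using mono[of q "\<epsilon> n" n] q Bm by (intro finite_measure_mono) auto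
    also have "\<dots> \<le> q" using q unfolding R_def by simp
    finally show ?thesis using q by simp
  qed
  have rlim: "r \<longlonglongrightarrow> 0"
  proof (rule LIMSEQ_I)
    fix d :: real assume d: "0 < d"
    have "d/2 > 0" using d by simp
    from conv[OF this, THEN LIMSEQ_D, OF this] obtain N where
      N: "\<And>n. n \<ge> N \<Longrightarrow> norm (measure M (B n (d/2)) - 0) < d/2" by blast
    show "\<exists>N. \<forall>n\<ge>N. norm (r n - 0) < d"
    proof (intro exI allI impI)
      fix n assume "N \<le> n"
      then have "d/2 \<in> R n" using N[of n] d unfolding R_def by simp
      then have "r n \<le> d/2" unfolding r_def by (rule cInf_lower[OF _ bdd])
      then show "norm (r n - 0) < d" using r0[of n] d by simp
    qed
  qed
  have elim: "\<epsilon> \<longlonglongrightarrow> 0"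
    unfolding \<epsilon>_def using tendsto_add[OF rlim LIMSEQ_inverse_real_of_nat] by simp
  have "(\<lambda>n. measure M (B n (\<epsilon> n))) \<longlonglongrightarrow> 0"
    by (rule tendsto_sandwich[of "\<lambda>_. 0" _ _ \<epsilon>]) (use mle elim in auto)
  then show ?thesis using elim by blast
qed

lemma conv_prob:
  assumes P: "prob_space M" and Pm: "\<And>n. Q n \<in> sets M" and Nm: "N \<in> sets M" and N0: "emeasure M N = 0"
    and ev: "\<And>\<omega>. \<omega> \<in> space M \<Longrightarrow> \<omega> \<notin> N \<Longrightarrow> \<exists>n0. \<forall>n\<ge>n0. \<omega> \<notin> Q n"
  shows "(\<lambda>n. measure M (Q n)) \<longlonglongrightarrow> 0"
proof -
  interpret prob_space M by (rule P)
  define A where "A m = (\<Union>n\<in>{m..}. Q n)" for m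
  have Am: "range A \<subseteq> sets M" unfolding A_def using Pm by auto
  have dec: "decseq A" unfolding A_def decseq_def by (auto, meson atLeast_iff order_trans)
  have lim: "(\<lambda>m. measure M (A m)) \<longlonglongrightarrow> measure M (\<Inter>m. A m)"
    by (rule Lim_measure_decseq[OF Am dec]) simp
  have sub: "(\<Inter>m. A m) \<subseteq> N"
  proof
    fix \<omega> assume w: "\<omega> \<in> (\<Inter>m. A m)"
    then have "\<omega> \<in> A 0" by blast
    then have sp: "\<omega> \<in> space M" unfolding A_def using Pm sets.sets_into_space by blast
    show "\<omega> \<in> N"
    proof (rule ccontr)
      assume "\<omega> \<notin> N"
      then obtain n0 where "\<forall>n\<ge>n0. \<omega> \<notin> Q n" using ev sp by blast
      moreover have "\<omega> \<in> A n0" using w by blast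
      ultimately show False unfolding A_def by auto
    qed
  qed
  have "measure M (\<Inter>m. A m) \<le> measure M N"
    using sub Nm Am by (intro finite_measure_mono) auto
  moreover have "measure M N = 0" using N0 by (simp add: measure_def)
  ultimately have "measure M (\<Inter>m. A m) = 0" by (simp add: measure_nonneg antisym)
  with lim have limA: "(\<lambda>m. measure M (A m)) \<longlonglongrightarrow> 0" by simp
  show ?thesis
  proof (rule tendsto_sandwich[of "\<lambda>_. 0" _ _ "\<lambda>m. measure M (A m)"])
    show "\<forall>\<^sub>F n in sequentially. measure M (Q n) \<le> measure M (A n)"
      using Am Pm unfolding A_def by (intro always_eventually allI finite_measure_mono) auto
  qed (use limA in auto)
qed

theorem proposition1:
  fixes M :: "'a measure" and F :: "real \<Rightarrow> 'a measure"
    and w :: "real \<Rightarrow> 'a \<Rightarrow> real ^ 'd"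
    and x :: "real \<Rightarrow> 'a \<Rightarrow> real ^ 'n"
    and u :: "real \<Rightarrow> 'a \<Rightarrow> real ^ 'nu"
    and f :: "real \<Rightarrow> real ^ 'n \<Rightarrow> real ^ 'nu \<Rightarrow> real ^ 'n"
    and G :: "real \<Rightarrow> real ^ 'n \<Rightarrow> real ^ 'nu \<Rightarrow> real ^ 'd ^ 'n"
    and g :: "'m::finite \<Rightarrow> real ^ 'n \<Rightarrow> real"
    and a :: "'m \<Rightarrow> real ^ 'n \<Rightarrow> real ^ 'n"
    and H :: "'m \<Rightarrow> real ^ 'n \<Rightarrow> real ^ 'n ^ 'n"
    and T c :: real
    and k :: "nat \<Rightarrow> nat" and tp :: "nat \<Rightarrow> nat \<Rightarrow> real"
  assumes "prob_space M" and "is_filtration M F"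
    and "std_brownian_motion M F w"
    and "progressive F T u"
    and "0 < T"
    and sde: "sde_solution M F w T f G u x"
    (* g_j twice continuously differentiable with gradient a_j and Hessian H_j *)
    and grad: "\<And>j z. (g j has_derivative (\<lambda>h. a j z \<bullet> h)) (at z)"
    and hess: "\<And>j z. (a j has_derivative (\<lambda>h. H j z *v h)) (at z)"
    and hess_cont: "\<And>j. continuous_on UNIV (H j)"
    (* Control-Independence Assumption for each g_j *)
    and ctrl_indep: "\<And>j.
      (\<exists>\<kappa> :: real \<Rightarrow> real ^ 'n \<Rightarrow> real ^ 'nu. \<exists>L. L-lipschitz_on UNIV (\<lambda>(t, z). \<kappa> t z) \<and>
          (\<forall>t\<in>{0..T}. \<forall>\<omega>\<in>space M. u t \<omega> = \<kappa> t (x t \<omega>)))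
      \<or> (\<forall>t z v v'. a j z \<bullet> f t z v = a j z \<bullet> f t z v' \<and> a j z v* G t z v = a j z v* G t z v')"
    (* Paired-Lipschitz Assumption for g_j and G *)
    and paired_lip: "\<And>j.
      ((\<exists>G0. \<forall>t z v. G t z v = G0) \<and> (\<exists>L. L-lipschitz_on UNIV (a j)))
      \<or> ((\<exists>a0. \<forall>z. a j z = a0) \<and> (\<exists>L. L-lipschitz_on UNIV (\<lambda>(t, z, v). G t z v)))
      \<or> (bounded (range (a j)) \<and> (\<exists>L. L-lipschitz_on UNIV (a j)) \<and>
         bounded (range (\<lambda>(t, z, v). G t z v)) \<and> (\<exists>L. L-lipschitz_on UNIV (\<lambda>(t, z, v). G t z v)))"
    (* assumption (1) *)
    and f_bdd: "AE \<omega> in M. \<exists>B. \<forall>t\<in>{0..T}. norm (f t (x t \<omega>) (u t \<omega>)) \<le> B"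
    and f_L2: "(\<integral>\<^sup>+\<omega>. (\<integral>\<^sup>+t\<in>{0..T}. ennreal ((norm (f t (x t \<omega>) (u t \<omega>)))\<^sup>2) \<partial>lborel) \<partial>M) < \<infinity>"
    (* assumption (2) *)
    and G_bdd: "\<exists>B. \<forall>t\<in>{0..T}. (\<integral>\<^sup>+\<omega>. ennreal ((norm (G t (x t \<omega>) (u t \<omega>)))\<^sup>2) \<partial>M) \<le> ennreal B"
    and G_L2: "(\<integral>\<^sup>+\<omega>. (\<integral>\<^sup>+t\<in>{0..T}. ennreal ((norm (G t (x t \<omega>) (u t \<omega>)))\<^sup>2) \<partial>lborel) \<partial>M) < \<infinity>"
    (* partitions *)
    and part: "\<And>n. is_partition T (k n) (tp n)"
    and mesh0: "(\<lambda>n. mesh (k n) (tp n)) \<longlonglongrightarrow> 0"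
    and "0 < c" and kmesh: "\<And>n. real (k n) * mesh (k n) (tp n) \<le> c * T"
  shows "\<exists>\<epsilon> :: nat \<Rightarrow> real. \<epsilon> \<longlonglongrightarrow> 0 \<and>
           pathwise_uniform_conv M T \<epsilon>
             (\<lambda>n. yhat g a H f G x u w (k n) (tp n))
             (\<lambda>s \<omega>. \<chi> j. g j (x s \<omega>))"
proof -
  interpret P: prob_space M by (rule assms(1))
  have filt: "is_filtration M F" by (rule assms(2))
  have bm: "std_brownian_motion M F w" by (rule assms(3))
  have T0: "0 < T" by (rule assms(5))
  have cg: "\<And>j. continuous_on UNIV (g j)"
    by (intro continuous_at_imp_continuous_on ballI has_derivative_continuous[OF grad])
  have ca: "\<And>j. continuous_on UNIV (a j)"
    by (intro continuous_at_imp_continuous_on ballI has_derivative_continuous[OF hess])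
  have xm: "\<And>t. t \<in> {0..T} \<Longrightarrow> x t \<in> borel_measurable M"
    using sde filt_meas[OF filt] unfolding sde_solution_def by blast
  have fm: "\<And>t. t \<in> {0..T} \<Longrightarrow> (\<lambda>\<omega>. f t (x t \<omega>) (u t \<omega>)) \<in> borel_measurable M"
  proof -
    fix t assume t: "t \<in> {0..T}"
    have "progressive F T (\<lambda>t \<omega>. f t (x t \<omega>) (u t \<omega>))" using sde unfolding sde_solution_def by blast
    from prog_section[OF this t filt] show "(\<lambda>\<omega>. f t (x t \<omega>) (u t \<omega>)) \<in> borel_measurable M" .
  qed
  have Gm: "\<And>t. t \<in> {0..T} \<Longrightarrow> (\<lambda>\<omega>. G t (x t \<omega>) (u t \<omega>)) \<in> borel_measurable M"
  proof -
    fix t assume t: "t \<in> {0..T}"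
    have "progressive F T (\<lambda>t \<omega>. G t (x t \<omega>) (u t \<omega>))" using sde unfolding sde_solution_def ito_integral_def by blast
    from prog_section[OF this t filt] show "(\<lambda>\<omega>. G t (x t \<omega>) (u t \<omega>)) \<in> borel_measurable M" .
  qed
  have wm: "\<And>t. 0 \<le> t \<Longrightarrow> w t \<in> borel_measurable M"
    using bm filt_meas[OF filt] unfolding std_brownian_motion_def by blast
  define D where "D n s \<omega> = norm (yhat g a H f G x u w (k n) (tp n) s \<omega> - Yv g x s \<omega>)" for n s \<omega>
  define S where "S = insert T (\<rat> \<inter> {0..T})"
  have cS: "countable S" unfolding S_def using countable_Int1[OF countable_rat] by simp
  have S0T: "S \<subseteq> {0..T}" unfolding S_def using T0 by auto
  have Dm: "(\<lambda>\<omega>. D n s \<omega>) \<in> borel_measurable M" if s: "s \<in> {0..T}" for n s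
  proof -
    define t where "t = grid_pt (k n) (tp n) s"
    have t0T: "t \<in> {0..T}" using grid_bounds[OF part T0, of s n] s unfolding t_def by auto
    have "(\<lambda>\<omega>. norm (Yv g x t \<omega> + (s - t) *\<^sub>R hv a H f G x u t \<omega> + Sv a G x u t \<omega> *v (w s \<omega> - w t \<omega>)
            - Yv g x s \<omega>)) \<in> borel_measurable M"
    proof (rule D_meas[where g=g and a=a and H=H and x=x and t=t and s=s and f=f and u=u and G=G and M=M and w=w])
      show "x t \<in> borel_measurable M" "x s \<in> borel_measurable M" using xm t0T s by auto
      show "(\<lambda>\<omega>. f t (x t \<omega>) (u t \<omega>)) \<in> borel_measurable M" using fm t0T by auto
      show "(\<lambda>\<omega>. G t (x t \<omega>) (u t \<omega>)) \<in> borel_measurable M" using Gm t0T by auto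
    next
      show "\<And>j. continuous_on UNIV (g j)" "\<And>j. continuous_on UNIV (a j)" "\<And>j. continuous_on UNIV (H j)"
        using cg ca hess_cont by auto
    next
      show "w s \<in> borel_measurable M" using s by (intro wm) auto
      show "w t \<in> borel_measurable M" using t0T by (intro wm) auto
    qed
    then show ?thesis unfolding D_def yhat_eq[OF t_def[symmetric]] .
  qed
  define Bs where "Bs n e = {\<omega>\<in>space M. \<exists>s\<in>S. e < D n s \<omega>}" for n e
  have Bsm: "Bs n e \<in> sets M" for n e
    unfolding Bs_def
  proof (rule sets.sets_Collect_countable_Ex'[OF _ cS])
    fix s assume "s \<in> S"
    then have "(\<lambda>\<omega>. D n s \<omega>) \<in> borel_measurable M" using Dm S0T by blast
    from measurable_sets[OF this, of "{e<..}"]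
    show "{\<omega> \<in> space M. e < D n s \<omega>} \<in> sets M" by (simp add: vimage_def Int_def conj_commute)
  qed
  define good where "good \<omega> \<longleftrightarrow> continuous_on {0..T} (\<lambda>t. x t \<omega>) \<and> continuous_on {0..} (\<lambda>t. w t \<omega>) \<and>
      (\<exists>B. \<forall>t\<in>{0..T}. norm (f t (x t \<omega>) (u t \<omega>)) \<le> B)" for \<omega>
  have ae1: "AE \<omega> in M. continuous_on {0..T} (\<lambda>t. x t \<omega>)" using sde unfolding sde_solution_def by blast
  have ae2: "AE \<omega> in M. continuous_on {0..} (\<lambda>t. w t \<omega>)" using bm unfolding std_brownian_motion_def by blast
  have "AE \<omega> in M. good \<omega>" using ae1 ae2 f_bdd unfolding good_def by eventually_elim auto
  then obtain N where N: "{\<omega>\<in>space M. \<not> good \<omega>} \<subseteq> N" "emeasure M N = 0" "N \<in> sets M"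
    by (rule AE_E)
  have bnd: "\<exists>B\<ge>0. \<forall>t\<in>{0..T}. norm (hv a H f G x u t \<omega>) \<le> B \<and> (\<forall>v. norm (Sv a G x u t \<omega> *v v) \<le> B * norm v)"
    if gw: "good \<omega>" and wM: "\<omega> \<in> space M" for \<omega>
  proof (rule comb_bounds)
    fix j
    obtain Bf where Bf: "\<forall>t\<in>{0..T}. norm (f t (x t \<omega>) (u t \<omega>)) \<le> Bf" using gw unfolding good_def by blast
    have cx: "continuous_on {0..T} (\<lambda>t. x t \<omega>)" using gw unfolding good_def by blast
    have ctrl: "(\<exists>\<kappa> :: real \<Rightarrow> real ^ 'n \<Rightarrow> real ^ 'nu. \<exists>L. L-lipschitz_on UNIV (\<lambda>(t, z). \<kappa> t z) \<and>
          (\<forall>t\<in>{0..T}. u t \<omega> = \<kappa> t (x t \<omega>)))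
      \<or> (\<forall>t z v v'. a j z \<bullet> f t z v = a j z \<bullet> f t z v' \<and> a j z v* G t z v = a j z v* G t z v')"
      using ctrl_indep[of j]
    proof (elim disjE exE conjE)
      fix \<kappa> :: "real \<Rightarrow> real ^ 'n \<Rightarrow> real ^ 'nu" and L
      assume l: "L-lipschitz_on UNIV (\<lambda>(t, z). \<kappa> t z)" and e: "\<forall>t\<in>{0..T}. \<forall>\<omega>\<in>space M. u t \<omega> = \<kappa> t (x t \<omega>)"
      have "\<forall>t\<in>{0..T}. u t \<omega> = \<kappa> t (x t \<omega>)" using e wM by simp
      then show ?thesis using l by blast
    qed simp
    show "\<exists>C. \<forall>t\<in>{0..T}. \<bar>hv a H f G x u t \<omega> $ j\<bar> \<le> C \<and> norm (Sv a G x u t \<omega> $ j) \<le> C"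
      by (rule path_bounds[where x=x and \<omega>=\<omega> and T=T and f=f and u=u and G=G and a=a and H=H and j=j and Bf=Bf,
             OF cx Bf ca hess_cont hess ctrl paired_lip])
  qed
  have conv: "(\<lambda>n. measure M (Bs n e)) \<longlonglongrightarrow> 0" if e: "0 < e" for e
  proof (rule conv_prob[OF assms(1) Bsm N(3) N(2)])
    fix \<omega> assume wM: "\<omega> \<in> space M" and wN: "\<omega> \<notin> N"
    then have gw: "good \<omega>" using N(1) by blast
    obtain B where B: "0 \<le> B" "\<forall>t\<in>{0..T}. norm (hv a H f G x u t \<omega>) \<le> B \<and> (\<forall>v. norm (Sv a G x u t \<omega> *v v) \<le> B * norm v)"
      using bnd[OF gw wM] by blast
    have cx: "continuous_on {0..T} (\<lambda>t. x t \<omega>)" using gw unfolding good_def by blast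
    have cw: "continuous_on {0..T} (\<lambda>t. w t \<omega>)"
      using gw unfolding good_def by (meson atLeastAtMost_iff atLeast_iff continuous_on_subset subsetI)
    have cg': "\<And>j h S. continuous_on S h \<Longrightarrow> continuous_on S (\<lambda>z. g j (h z))"
      using continuous_on_compose2[OF cg] by blast
    have cY: "continuous_on {0..T} (\<lambda>t. Yv g x t \<omega>)" unfolding Yv_def by (intro continuous_intros cg' cx)
    obtain n0 where n0: "\<forall>n\<ge>n0. \<forall>s\<in>{0..T}. norm (yhat g a H f G x u w (k n) (tp n) s \<omega> - Yv g x s \<omega>) \<le> e"
      using det_conv[where x=x and \<omega>=\<omega> and T=T and f=f and u=u and G=G and a=a and H=H and g=g and w=w and k=k and tp=tp and B=B and e=e,
        OF T0 part mesh0 cY cw B e] by blast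
    show "\<exists>n0. \<forall>n\<ge>n0. \<omega> \<notin> Bs n e"
    proof (intro exI allI impI)
      fix n assume "n0 \<le> n"
      then have "\<forall>s\<in>S. D n s \<omega> \<le> e" using n0 S0T unfolding D_def by blast
      then show "\<omega> \<notin> Bs n e" unfolding Bs_def by (simp add: not_less)
    qed
  qed
  have mono: "Bs n e' \<subseteq> Bs n e" if ee: "e \<le> e'" for n e e'
  proof (rule subsetI)
    fix \<omega> assume "\<omega> \<in> Bs n e'"
    then obtain s where s: "\<omega> \<in> space M" "s \<in> S" "e' < D n s \<omega>" unfolding Bs_def by blast
    then have "e < D n s \<omega>" using ee by linarith
    then show "\<omega> \<in> Bs n e" unfolding Bs_def using s by blast
  qed
  obtain \<epsilon> where \<epsilon>: "\<epsilon> \<longlonglongrightarrow> 0" "(\<lambda>n. measure M (Bs n (\<epsilon> n))) \<longlonglongrightarrow> 0"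
  proof -
    have "\<exists>\<epsilon>. \<epsilon> \<longlonglongrightarrow> 0 \<and> (\<lambda>n. measure M (Bs n (\<epsilon> n))) \<longlonglongrightarrow> 0"
      by (rule kyfan[where B=Bs, OF assms(1) Bsm mono conv])
    then show ?thesis using that by blast
  qed
  define E where "E n = Bs n (\<epsilon> n) \<union> N" for n
  have Em: "E n \<in> sets M" for n unfolding E_def using Bsm N(3) by (rule sets.Un)
  have sub: "{\<omega>\<in>space M. \<exists>s\<in>{0..T}. norm (yhat g a H f G x u w (k n) (tp n) s \<omega> - (\<chi> j. g j (x s \<omega>))) > \<epsilon> n * 1} \<subseteq> E n" for n
  proof
    fix \<omega> assume "\<omega> \<in> {\<omega>\<in>space M. \<exists>s\<in>{0..T}. norm (yhat g a H f G x u w (k n) (tp n) s \<omega> - (\<chi> j. g j (x s \<omega>))) > \<epsilon> n * 1}"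
    then obtain s where wM: "\<omega> \<in> space M" and s: "s \<in> {0..T}"
      and gt: "\<epsilon> n < norm (yhat g a H f G x u w (k n) (tp n) s \<omega> - Yv g x s \<omega>)" unfolding Yv_def by auto
    show "\<omega> \<in> E n"
    proof (cases "\<omega> \<in> N")
      case True then show ?thesis unfolding E_def by blast
    next
      case False
      then have gw: "good \<omega>" using N(1) wM by blast
      have cx: "continuous_on {0..T} (\<lambda>t. x t \<omega>)" using gw unfolding good_def by blast
      have cw: "continuous_on {0..T} (\<lambda>t. w t \<omega>)"
        using gw unfolding good_def by (meson atLeastAtMost_iff atLeast_iff continuous_on_subset subsetI)
      obtain q where "q \<in> insert T (\<rat> \<inter> {0..T})" "\<epsilon> n < norm (yhat g a H f G x u w (k n) (tp n) q \<omega> - Yv g x q \<omega>)"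
        using rat_approx[where x=x and \<omega>=\<omega> and T=T and f=f and u=u and G=G and a=a and H=H and g=g and w=w and k="k n" and tp="tp n" and s=s,
          OF T0 part cx cw cg s gt] by blast
      then have "\<omega> \<in> Bs n (\<epsilon> n)" unfolding Bs_def D_def S_def using wM by blast
      then show ?thesis unfolding E_def by blast
    qed
  qed
  have mE: "(\<lambda>n. measure M (E n)) \<longlonglongrightarrow> 0"
  proof (rule tendsto_sandwich[of "\<lambda>_. 0" _ _ "\<lambda>n. measure M (Bs n (\<epsilon> n))"])
    have "measure M N = 0" using N(2) by (simp add: measure_def)
    then show "\<forall>\<^sub>F n in sequentially. measure M (E n) \<le> measure M (Bs n (\<epsilon> n))"
      unfolding E_def using measure_Un_le[OF Bsm N(3)] by (intro always_eventually allI) (metis add.right_neutral)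
  qed (use \<epsilon>(2) in auto)
  show ?thesis
    unfolding pathwise_uniform_conv_def
    apply (rule exI[of _ \<epsilon>], rule conjI[OF \<epsilon>(1)])
    apply (rule exI[of _ "\<lambda>_. 1"])
    apply (intro conjI)
      apply simp
     apply simp
    apply (rule exI[of _ E])
    using Em sub mE by blast
qed

end
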